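(* Both identities $((xy)z)(xy)=((yx)z)(yx)$ and $(z(yx))(xy)=(z(xy))(yx)$ are consequences of $\mathcal{B}_{1,2,4}$, where $\mathcal{B}_{1,2,4}$ consists of (M1) $(xy)(zt)=(xz)(yt)$, (M2) $(xy)(zt)=(ty)(zx)$, (M3) $((xy)z)t=((xt)z)y$, (M4) $(x(yz))t=(x(tz))y$, (M5) $x((yz)t)=z((yx)t)$, (M6) $x(y(zt))=z(y(xt))$, and $x(x(yz))=(x(zy))x$. *)

theory Defs
  imports Main
begin

end

theory Submission
  imports Defs
begin

theorem lemma6p1:
  fixes m :: "'a \<Rightarrow> 'a \<Rightarrow> 'a"
  assumes M1: "\<And>x y z t. m (m x y) (m z t) = m (m x z) (m y t)"
      and M2: "\<And>x y z t. m (m x y) (m z t) = m (m t y) (m z x)"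
      and M3: "\<And>x y z t. m (m (m x y) z) t = m (m (m x t) z) y"
      and M4: "\<And>x y z t. m (m x (m y z)) t = m (m x (m t z)) y"
      and M5: "\<And>x y z t. m x (m (m y z) t) = m z (m (m y x) t)"
      and M6: "\<And>x y z t. m x (m y (m z t)) = m z (m y (m x t))"
      and M7: "\<And>x y z. m x (m x (m y z)) = m (m x (m z y)) x"
  shows "(\<forall>x y z. m (m (m x y) z) (m x y) = m (m (m y x) z) (m y x))
       \<and> (\<forall>x y z. m (m z (m y x)) (m x y) = m (m z (m x y)) (m y x))"
  apply (intro conjI allI)
   apply (metis M2 M4 M6 M7)
  apply (metis M4 M5 M6 M7)
  done

end
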